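(* Let $(X,d)$ be a quasi-pseudometric space and $f:X\to\mathbb{R}\cup\{\infty\}$ a function. 1. $f$ is nearly lower semicontinuous at $x\in X$ if and only if $f(x)\le\liminf_{n\to\infty}f(x_n)$ holds for every sequence $(x_n)$ in $X$ which has no constant subsequence and converges to $x$. 2. $f$ is lower semicontinuous on $X$ if and only if it is nearly lower semicontinuous on $X$ and $d$-monotone. 3. If the topology $\tau_d$ is $T_1$, then every nearly lower semicontinuous function $f:X\to\mathbb{R}\cup\{\infty\}$ is lower semicontinuous.
   Context: A quasi-pseudometric on a set $X$ is a map $d:X\times X\to[0,\infty)$ with $d(x,x)=0$ and $d(x,z)\le d(x,y)+d(y,z)$ for all $x,y,z$ (symmetry is not assumed). The topology $\tau_d$ has as neighbourhood base at $x$ the balls $B_d(x,r)=\{y: d(x,y)<r\}$, $r>0$; thus $x_n\to x$ iff $d(x,x_n)\to0$. All topological notions refer to $\tau_d$. A function $f:X\to\mathbb{R}\cup\{\infty\}$ is lower semicontinuous (lsc) at $x$ if $f(x)\le\liminf_n f(x_n)$ for every sequence $x_n\to x$; nearly lsc at $x$ if this inequality holds for every sequence with pairwise distinct terms converging to $x$; lsc (nearly lsc) on $X$ if it is so at every point. $f$ is $d$-monotone if $d(x,y)=0$ implies $f(x)\le f(y)$. *)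

theory Defs
  imports "HOL-Analysis.Analysis" "HOL-Library.Extended_Real"
begin

definition quasi_pseudometric :: "'a set \<Rightarrow> ('a \<Rightarrow> 'a \<Rightarrow> real) \<Rightarrow> bool" where
  "quasi_pseudometric X d \<longleftrightarrow>
     (\<forall>x\<in>X. \<forall>y\<in>X. 0 \<le> d x y) \<and> (\<forall>x\<in>X. d x x = 0) \<and>
     (\<forall>x\<in>X. \<forall>y\<in>X. \<forall>z\<in>X. d x z \<le> d x y + d y z)"

definition qball :: "'a set \<Rightarrow> ('a \<Rightarrow> 'a \<Rightarrow> real) \<Rightarrow> 'a \<Rightarrow> real \<Rightarrow> 'a set" where
  "qball X d x r = {y \<in> X. d x y < r}"

definition qtopology :: "'a set \<Rightarrow> ('a \<Rightarrow> 'a \<Rightarrow> real) \<Rightarrow> 'a topology" where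
  "qtopology X d = topology (\<lambda>U. U \<subseteq> X \<and> (\<forall>x\<in>U. \<exists>r>0. qball X d x r \<subseteq> U))"

definition qconv :: "('a \<Rightarrow> 'a \<Rightarrow> real) \<Rightarrow> (nat \<Rightarrow> 'a) \<Rightarrow> 'a \<Rightarrow> bool" where
  "qconv d xs x \<longleftrightarrow> (\<lambda>n. d x (xs n)) \<longlonglongrightarrow> 0"

definition lsc_at :: "'a set \<Rightarrow> ('a \<Rightarrow> 'a \<Rightarrow> real) \<Rightarrow> ('a \<Rightarrow> ereal) \<Rightarrow> 'a \<Rightarrow> bool" where
  "lsc_at X d f x \<longleftrightarrow>
     (\<forall>xs. (\<forall>n. xs n \<in> X) \<longrightarrow> qconv d xs x \<longrightarrow> f x \<le> liminf (\<lambda>n. f (xs n)))"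

definition nearly_lsc_at :: "'a set \<Rightarrow> ('a \<Rightarrow> 'a \<Rightarrow> real) \<Rightarrow> ('a \<Rightarrow> ereal) \<Rightarrow> 'a \<Rightarrow> bool" where
  "nearly_lsc_at X d f x \<longleftrightarrow>
     (\<forall>xs. (\<forall>n. xs n \<in> X) \<longrightarrow> inj xs \<longrightarrow> qconv d xs x \<longrightarrow> f x \<le> liminf (\<lambda>n. f (xs n)))"

definition lsc_on :: "'a set \<Rightarrow> ('a \<Rightarrow> 'a \<Rightarrow> real) \<Rightarrow> ('a \<Rightarrow> ereal) \<Rightarrow> bool" where
  "lsc_on X d f \<longleftrightarrow> (\<forall>x\<in>X. lsc_at X d f x)"

definition nearly_lsc_on :: "'a set \<Rightarrow> ('a \<Rightarrow> 'a \<Rightarrow> real) \<Rightarrow> ('a \<Rightarrow> ereal) \<Rightarrow> bool" where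
  "nearly_lsc_on X d f \<longleftrightarrow> (\<forall>x\<in>X. nearly_lsc_at X d f x)"

definition d_monotone :: "'a set \<Rightarrow> ('a \<Rightarrow> 'a \<Rightarrow> real) \<Rightarrow> ('a \<Rightarrow> ereal) \<Rightarrow> bool" where
  "d_monotone X d f \<longleftrightarrow> (\<forall>x\<in>X. \<forall>y\<in>X. d x y = 0 \<longrightarrow> f x \<le> f y)"

definition has_const_subseq :: "(nat \<Rightarrow> 'a) \<Rightarrow> bool" where
  "has_const_subseq xs \<longleftrightarrow> (\<exists>(r::nat \<Rightarrow> nat) (c::'a). strict_mono r \<and> (\<forall>n. xs (r n) = c))"

end

theory Submission imports Defs begin

lemma inj_seq_filterlim:
  fixes r :: "nat \<Rightarrow> nat" assumes "inj r"
  shows "filterlim r sequentially sequentially"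
  unfolding filterlim_at_top
proof
  fix N
  have "finite {m. r m < N}"
    using finite_vimageI[of "{..<N}" r] assms by (simp add: vimage_def)
  then have "eventually (\<lambda>m. \<not> r m < N) cofinite"
    by (simp add: eventually_cofinite)
  then show "eventually (\<lambda>m. N \<le> r m) sequentially"
    by (simp add: cofinite_eq_sequentially not_less)
qed

lemma key:
  assumes X: "\<forall>n. xs n \<in> X" and c: "qconv d xs x" and S: "infinite S"
  shows "(\<exists>g. (\<forall>n. g n \<in> X) \<and> inj g \<and> qconv d g x \<and> (\<forall>n. \<exists>m\<in>S. g n = xs m))
        \<or> (\<exists>v. infinite {n\<in>S. xs n = v})"
proof (cases "finite (xs ` S)")
  case True
  have "S = (\<Union>v\<in>xs ` S. {n\<in>S. xs n = v})" by auto
  with True S have "\<exists>v\<in>xs ` S. infinite {n\<in>S. xs n = v}"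
    by (metis (no_types, lifting) finite_UN)
  then show ?thesis by blast
next
  case False
  then obtain g :: "nat \<Rightarrow> 'a" where g: "inj g" "range g \<subseteq> xs ` S"
    using infinite_countable_subset by blast
  define r where "r m = (SOME n. n \<in> S \<and> xs n = g m)" for m
  have r: "r m \<in> S \<and> xs (r m) = g m" for m
  proof -
    have "g m \<in> xs ` S" using g(2) by auto
    then have "\<exists>n. n \<in> S \<and> xs n = g m" by auto
    then show ?thesis unfolding r_def by (rule someI_ex)
  qed
  have "inj r" using g(1) r by (metis injI inj_eq)
  have "qconv d g x"
  proof -
    have "(\<lambda>m. d x (xs (r m))) \<longlonglongrightarrow> 0"
      using filterlim_compose[OF c[unfolded qconv_def] inj_seq_filterlim[OF \<open>inj r\<close>]]
      by (simp add: o_def)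
    then show ?thesis unfolding qconv_def using r by simp
  qed
  then show ?thesis using g(1) r X by metis
qed

lemma infinite_fiber_zero:
  assumes c: "qconv d xs x" and inf: "infinite {n. xs n = v}"
  shows "d x v = 0"
proof -
  obtain r :: "nat \<Rightarrow> nat" where r: "strict_mono r" "\<forall>n. r n \<in> {n. xs n = v}"
    using infinite_enumerate[OF inf] by blast
  have "(\<lambda>m. d x (xs (r m))) \<longlonglongrightarrow> 0"
    using LIMSEQ_subseq_LIMSEQ[OF c[unfolded qconv_def] r(1)] by (simp add: o_def)
  then have "(\<lambda>m. d x v) \<longlonglongrightarrow> 0" using r(2) by simp
  then show ?thesis using LIMSEQ_const_iff by blast
qed

lemma liminf_freq:
  assumes "liminf (\<lambda>n. (F n::ereal)) < C"
  shows "\<exists>y<C. infinite {n. F n \<le> y}"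
proof -
  from assms obtain y where y: "y < C" "\<not> eventually (\<lambda>n. y < F n) sequentially"
    by (metis le_Liminf_iff not_le order.refl)
  then have "\<not> eventually (\<lambda>n. y < F n) cofinite" by (simp add: cofinite_eq_sequentially)
  then have "infinite {n. \<not> y < F n}" by (simp add: eventually_cofinite)
  then show ?thesis using y(1) by (auto simp: not_less)
qed

lemma main_contra:
  assumes X: "\<forall>n. xs n \<in> X" and c: "qconv d xs x"
    and lt: "liminf (\<lambda>n. f (xs n)) < f x"
    and nl: "nearly_lsc_at X d f x"
  shows "\<exists>v. infinite {n. xs n = v} \<and> f v < f x"
proof -
  obtain y where y: "y < f x" "infinite {n. f (xs n) \<le> y}"
    using liminf_freq[OF lt] by blast
  from key[OF X c y(2)] show ?thesis
  proof
    assume "\<exists>g. (\<forall>n. g n \<in> X) \<and> inj g \<and> qconv d g x \<and> (\<forall>n. \<exists>m\<in>{n. f (xs n) \<le> y}. g n = xs m)"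
    then obtain g where g0: "\<forall>n. g n \<in> X" "inj g" "qconv d g x" "\<forall>n. \<exists>m\<in>{n. f (xs n) \<le> y}. g n = xs m" by blast
    have g4: "\<forall>n. f (g n) \<le> y"
    proof
      fix n obtain m where "f (xs m) \<le> y" "g n = xs m" using g0(4) by blast
      then show "f (g n) \<le> y" by simp
    qed
    note g = g0(1-3) g4
    have "f x \<le> liminf (\<lambda>n. f (g n))" using nl g unfolding nearly_lsc_at_def by blast
    also have "\<dots> \<le> y" using g(4) by (intro Liminf_le) auto
    finally show ?thesis using y(1) by simp
  next
    assume "\<exists>v. infinite {n \<in> {n. f (xs n) \<le> y}. xs n = v}"
    then obtain v where v: "infinite {n \<in> {n. f (xs n) \<le> y}. xs n = v}" by blast
    then have "{n \<in> {n. f (xs n) \<le> y}. xs n = v} \<noteq> {}" by (metis finite.emptyI)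
    then obtain n where "f (xs n) \<le> y" "xs n = v" by blast
    then have "f v < f x" using y(1) by simp
    moreover have "infinite {n. xs n = v}" using v by (rule infinite_super[rotated]) auto
    ultimately show ?thesis by blast
  qed
qed

lemma no_const_fiber:
  assumes "\<not> has_const_subseq xs" shows "finite {n. xs n = v}"
proof (rule ccontr)
  assume "infinite {n. xs n = v}"
  from infinite_enumerate[OF this] obtain r :: "nat \<Rightarrow> nat" where "strict_mono r" "\<forall>n. xs (r n) = v" by auto
  then show False using assms unfolding has_const_subseq_def by blast
qed

lemma inj_no_const:
  assumes "inj xs" shows "\<not> has_const_subseq xs"
proof
  assume "has_const_subseq xs"
  then obtain r :: "nat \<Rightarrow> nat" and c where r: "strict_mono r" "\<forall>n. xs (r n) = c"
    unfolding has_const_subseq_def by blast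
  then have "xs (r 0) = xs (r 1)" by simp
  then have "r 0 = r 1" using assms by (simp add: inj_eq)
  then show False using r(1) by (simp add: strict_mono_eq)
qed

lemma istop_q: "istopology (\<lambda>U. U \<subseteq> X \<and> (\<forall>x\<in>U. \<exists>r>0. qball X d x r \<subseteq> U))"
  unfolding istopology_def
proof (rule conjI; intro allI impI)
  fix S T assume S: "S \<subseteq> X \<and> (\<forall>x\<in>S. \<exists>r>0. qball X d x r \<subseteq> S)"
    and T: "T \<subseteq> X \<and> (\<forall>x\<in>T. \<exists>r>0. qball X d x r \<subseteq> T)"
  show "S \<inter> T \<subseteq> X \<and> (\<forall>x\<in>S \<inter> T. \<exists>r>0. qball X d x r \<subseteq> S \<inter> T)"
  proof (intro conjI ballI)
    show "S \<inter> T \<subseteq> X" using S by auto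
    fix x assume "x \<in> S \<inter> T"
    then obtain r1 r2 where "r1 > 0" "qball X d x r1 \<subseteq> S" "r2 > 0" "qball X d x r2 \<subseteq> T" using S T by blast
    then show "\<exists>r>0. qball X d x r \<subseteq> S \<inter> T"
      by (intro exI[of _ "min r1 r2"]) (auto simp: qball_def)
  qed
next
  fix K assume K: "\<forall>U\<in>K. U \<subseteq> X \<and> (\<forall>x\<in>U. \<exists>r>0. qball X d x r \<subseteq> U)"
  show "\<Union>K \<subseteq> X \<and> (\<forall>x\<in>\<Union>K. \<exists>r>0. qball X d x r \<subseteq> \<Union>K)"
  proof (intro conjI ballI)
    show "\<Union>K \<subseteq> X" using K by blast
    fix x assume "x \<in> \<Union>K"
    then obtain U where U: "U \<in> K" "x \<in> U" by blast
    then obtain r where "r > 0" "qball X d x r \<subseteq> U" using K by blast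
    then show "\<exists>r>0. qball X d x r \<subseteq> \<Union>K" using U(1) by blast
  qed
qed

lemma topspace_q: "topspace (qtopology X d) = X"
proof -
  have o: "openin (qtopology X d) U \<longleftrightarrow> U \<subseteq> X \<and> (\<forall>x\<in>U. \<exists>r>0. qball X d x r \<subseteq> U)" for U
    unfolding qtopology_def topology_inverse'[OF istop_q] by (rule refl)
  have "openin (qtopology X d) X" unfolding o by (auto simp: qball_def intro: exI[of _ 1])
  moreover have "\<And>U. openin (qtopology X d) U \<Longrightarrow> U \<subseteq> X" unfolding o by blast
  ultimately show ?thesis unfolding topspace_def by blast
qed

lemma t1_mono:
  assumes t1: "t1_space (qtopology X d)" and x: "x \<in> X" "y \<in> X" and d0: "d x y = 0"
  shows "x = y"
proof (rule ccontr)
  assume "x \<noteq> y"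
  have o: "openin (qtopology X d) U \<longleftrightarrow> U \<subseteq> X \<and> (\<forall>x\<in>U. \<exists>r>0. qball X d x r \<subseteq> U)" for U
    unfolding qtopology_def topology_inverse'[OF istop_q] by (rule refl)
  obtain U where U: "openin (qtopology X d) U" "x \<in> U" "y \<notin> U"
    using t1 x \<open>x \<noteq> y\<close> unfolding t1_space_def topspace_q by blast
  then obtain r where "r > 0" "qball X d x r \<subseteq> U" unfolding o by blast
  then have "y \<in> U" using x d0 by (auto simp: qball_def)
  then show False using U by simp
qed

theorem proposition2p11:
  fixes X :: "'a set" and d :: "'a \<Rightarrow> 'a \<Rightarrow> real" and f :: "'a \<Rightarrow> ereal"
  assumes "quasi_pseudometric X d"
    and "\<forall>x\<in>X. f x \<noteq> -\<infinity>"
  shows "(\<forall>x\<in>X. nearly_lsc_at X d f x \<longleftrightarrow>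
            (\<forall>xs. (\<forall>n. xs n \<in> X) \<longrightarrow> \<not> has_const_subseq xs \<longrightarrow> qconv d xs x
                 \<longrightarrow> f x \<le> liminf (\<lambda>n. f (xs n))))
      \<and> (lsc_on X d f \<longleftrightarrow> nearly_lsc_on X d f \<and> d_monotone X d f)
      \<and> (t1_space (qtopology X d) \<longrightarrow> nearly_lsc_on X d f \<longrightarrow> lsc_on X d f)"
proof -
  have dxx: "\<forall>x\<in>X. d x x = 0" using assms(1) unfolding quasi_pseudometric_def by blast
  have P1: "nearly_lsc_at X d f x \<longleftrightarrow>
            (\<forall>xs. (\<forall>n. xs n \<in> X) \<longrightarrow> \<not> has_const_subseq xs \<longrightarrow> qconv d xs x
                 \<longrightarrow> f x \<le> liminf (\<lambda>n. f (xs n)))" for x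
  proof
    assume nl: "nearly_lsc_at X d f x"
    show "\<forall>xs. (\<forall>n. xs n \<in> X) \<longrightarrow> \<not> has_const_subseq xs \<longrightarrow> qconv d xs x
                 \<longrightarrow> f x \<le> liminf (\<lambda>n. f (xs n))"
    proof (intro allI impI)
      fix xs assume a: "\<forall>n. xs n \<in> X" "\<not> has_const_subseq xs" "qconv d xs x"
      show "f x \<le> liminf (\<lambda>n. f (xs n))"
      proof (rule ccontr)
        assume "\<not> ?thesis"
        then have "liminf (\<lambda>n. f (xs n)) < f x" by simp
        from main_contra[OF a(1) a(3) this nl] no_const_fiber[OF a(2)] show False by blast
      qed
    qed
  next
    assume "\<forall>xs. (\<forall>n. xs n \<in> X) \<longrightarrow> \<not> has_const_subseq xs \<longrightarrow> qconv d xs x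
                 \<longrightarrow> f x \<le> liminf (\<lambda>n. f (xs n))"
    then show "nearly_lsc_at X d f x" unfolding nearly_lsc_at_def using inj_no_const by blast
  qed
  have P2: "lsc_on X d f \<longleftrightarrow> nearly_lsc_on X d f \<and> d_monotone X d f"
  proof
    assume l: "lsc_on X d f"
    have "nearly_lsc_on X d f" using l unfolding lsc_on_def lsc_at_def nearly_lsc_on_def nearly_lsc_at_def by blast
    moreover have "d_monotone X d f" unfolding d_monotone_def
    proof (intro ballI impI)
      fix x y assume xy: "x \<in> X" "y \<in> X" "d x y = 0"
      have "qconv d (\<lambda>n. y) x" using xy by (simp add: qconv_def)
      have "lsc_at X d f x" using l xy unfolding lsc_on_def by blast
      have H: "\<forall>xs. (\<forall>n. xs n \<in> X) \<longrightarrow> qconv d xs x \<longrightarrow> f x \<le> liminf (\<lambda>n. f (xs n))"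
        using \<open>lsc_at X d f x\<close> unfolding lsc_at_def .
      have "f x \<le> liminf (\<lambda>n. f y)" using spec[OF H, of "\<lambda>n. y"] xy \<open>qconv d (\<lambda>n. y) x\<close> by simp
      then show "f x \<le> f y" by (simp add: Liminf_const)
    qed
    ultimately show "nearly_lsc_on X d f \<and> d_monotone X d f" by blast
  next
    assume a: "nearly_lsc_on X d f \<and> d_monotone X d f"
    show "lsc_on X d f" unfolding lsc_on_def lsc_at_def
    proof (intro ballI allI impI)
      fix x xs assume x: "x \<in> X" and b: "\<forall>n. xs n \<in> X" "qconv d xs x"
      show "f x \<le> liminf (\<lambda>n. f (xs n))"
      proof (rule ccontr)
        assume "\<not> ?thesis"
        then have "liminf (\<lambda>n. f (xs n)) < f x" by simp
        from main_contra[OF b(1) b(2) this] a x obtain v where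
          v: "infinite {n. xs n = v}" "f v < f x" unfolding nearly_lsc_on_def by blast
        have "d x v = 0" using infinite_fiber_zero[OF b(2) v(1)] .
        moreover have "{n. xs n = v} \<noteq> {}" using v(1) by (metis finite.emptyI)
        then obtain n where "xs n = v" by blast
        then have "v \<in> X" using b(1) by blast
        ultimately have "f x \<le> f v" using a x unfolding d_monotone_def by blast
        then show False using v(2) by simp
      qed
    qed
  qed
  have P3: "t1_space (qtopology X d) \<longrightarrow> nearly_lsc_on X d f \<longrightarrow> lsc_on X d f"
  proof (intro impI)
    assume t: "t1_space (qtopology X d)" and n: "nearly_lsc_on X d f"
    have "d_monotone X d f" unfolding d_monotone_def
      using t1_mono[OF t] by auto
    then show "lsc_on X d f" using P2 n by blast
  qed
  show ?thesis using P1 P2 P3 by blast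
qed

end
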